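(* Let $t_0>0$ and let $\{\sigma_t\}_{0<t<t_0}$ be a family of positive semidefinite $2\times 2$ complex matrices, written in a fixed orthonormal basis $\{\ket0,\ket1\}$ of $\mathbb C^2$ as $$\sigma_t=\begin{pmatrix} a_t & b_t\\ \bar b_t & d_t\end{pmatrix},$$ with $\operatorname{tr}\sigma_t>0$ and such that the normalized states $\sigma_t/\operatorname{tr}\sigma_t$ converge to the pure state $\ket0\bra0$ as $t\to0$. Suppose there exist constants $l>0$ and $c<\infty$ such that $|b_t|\ge l t$ and $d_t\le c t^2$ for all sufficiently small $t>0$. Then there is no representation $$\sigma_t=\int_\Lambda f_t(\lambda)\,\tau_\lambda\,d\mu(\lambda)\qquad\text{for all } 0<t<t_0,$$ where $\mu$ is a finite (positive) measure on a measurable space $\Lambda$ not depending on $t$, $\lambda\mapsto\tau_\lambda$ is a measurable map into the set of $2\times2$ density matrices (qubit states), and, for each $t$, $f_t:\Lambda\to[0,1]$ is measurable. In particular, any projective assemblage containing such a family of unnormalized conditional states admits no local hidden state model with a finite hidden-state measure.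
   Context: A local hidden state (LHS) model for an assemblage of unnormalized conditional states $\sigma_{a|M}$ on a trusted qubit is a representation $\sigma_{a|M}=\int_\Lambda p(a|M,\lambda)\tau_\lambda\,d\mu(\lambda)$ with $\mu$ a finite measure (e.g. a probability measure), $\tau_\lambda$ density matrices, and response functions $p(a|M,\lambda)\in[0,1]$ summing to one over outcomes $a$. *)

theory Defs
  imports "HOL-Analysis.Analysis"
begin

text \<open>2x2 complex matrices in the fixed basis |0>,|1>; index 1 of type 2 is |0>, index 2 is |1>.\<close>
type_synonym cmat2 = "complex^2^2"

definition psd :: "cmat2 \<Rightarrow> bool" where
  "psd A \<longleftrightarrow> (\<forall>v::complex^2.
      (\<Sum>i\<in>UNIV. cnj (v$i) * (A *v v)$i) \<in> \<real> \<and>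
      0 \<le> Re (\<Sum>i\<in>UNIV. cnj (v$i) * (A *v v)$i))"

definition density_matrix :: "cmat2 \<Rightarrow> bool" where
  "density_matrix A \<longleftrightarrow> psd A \<and> trace A = 1"

definition ket0bra0 :: cmat2 where
  "ket0bra0 = (\<chi> i j. if i = 1 \<and> j = 1 then 1 else 0)"

end

theory Submission imports Defs begin

lemma form_eq: "(\<Sum>i\<in>UNIV. cnj (v$i) * ((A::cmat2) *v v)$i) =
   cnj (v$1) * (A$1$1 * v$1 + A$1$2 * v$2) + cnj (v$2) * (A$2$1 * v$1 + A$2$2 * v$2)"
  by (simp add: sum_2 matrix_vector_mult_def)

lemma dm_props:
  assumes "density_matrix A"
  shows "0 \<le> Re (A$2$2)" "(cmod (A$1$2))\<^sup>2 \<le> Re (A$2$2)"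
proof -
  have P: "\<And>v. (\<Sum>i\<in>UNIV. cnj (v$i) * (A *v v)$i) \<in> \<real> \<and> 0 \<le> Re (\<Sum>i\<in>UNIV. cnj (v$i) * (A *v v)$i)"
    using assms unfolding density_matrix_def psd_def by blast
  have tr: "A$1$1 + A$2$2 = 1" using assms unfolding density_matrix_def trace_def by (simp add: sum_2)
  have e1: "Im (A$1$1) = 0" "0 \<le> Re (A$1$1)" using P[of "vector [1,0]"] by (auto simp: form_eq complex_is_Real_iff)
  have e2: "Im (A$2$2) = 0" "0 \<le> Re (A$2$2)" using P[of "vector [0,1]"] by (auto simp: form_eq complex_is_Real_iff)
  have e3: "Im (A$1$2) + Im (A$2$1) = 0" using P[of "vector [1,1]"] e1 e2 by (auto simp: form_eq complex_is_Real_iff)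
  have e4: "Re (A$1$2) - Re (A$2$1) = 0" using P[of "vector [1,\<i>]"] e1 e2 by (auto simp: form_eq complex_is_Real_iff)
  have p1: "Re (A$1$1) \<le> 1" using tr e2 by (metis add.commute le_add_same_cancel2 one_complex.simps(1) plus_complex.simps(1))
  have r: "A$2$1 = cnj (A$1$2)" using e3 e4 by (simp add: complex_eq_iff)
  have e5: "0 \<le> Re (A$2$2) - (cmod (A$1$2))\<^sup>2 * (2 - Re (A$1$1))"
  proof -
    have "0 \<le> Re (cnj (- A$1$2) * (A$1$1 * (- A$1$2) + A$1$2 * 1) + cnj 1 * (A$2$1 * (- A$1$2) + A$2$2 * 1))"
      using P[of "vector [- A$1$2, 1]"] unfolding form_eq by simp
    then show ?thesis using e1 e2 unfolding r cmod_power2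
      by (simp add: algebra_simps power2_eq_square)
  qed
  show "0 \<le> Re (A$2$2)" by (rule e2(2))
  have "(cmod (A$1$2))\<^sup>2 \<le> (cmod (A$1$2))\<^sup>2 * (2 - Re (A$1$1))"
    using p1 by (simp add: mult_le_cancel_left1)
  then show "(cmod (A$1$2))\<^sup>2 \<le> Re (A$2$2)" using e5 by linarith
qed

lemma pw:
  fixes g s q a d :: real
  assumes "0 \<le> g" "g \<le> 1" "0 \<le> s" "0 \<le> q" "q\<^sup>2 \<le> s" "a > 0" "d > 0"
  shows "g * q \<le> a * (if 0 < s \<and> s < d\<^sup>2 then 1 else 0) + g * s * (1/(4*a) + 1/d)"
proof (cases "s = 0")
  case True
  then have "q\<^sup>2 \<le> 0" using assms by simp
  then have "q = 0" by simp
  then show ?thesis using assms True by simp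
next
  case False
  then have sp: "0 < s" using assms by simp
  show ?thesis
  proof (cases "s < d\<^sup>2")
    case True
    have "q \<le> a + q\<^sup>2/(4*a)"
    proof -
      have "0 \<le> (q - 2*a)\<^sup>2" by simp
      then have "4*a*q \<le> 4*a*a + q\<^sup>2" by (simp add: power2_eq_square algebra_simps)
      then show ?thesis using assms(6) by (simp add: field_simps)
    qed
    also have "\<dots> \<le> a + s/(4*a)" using assms by (simp add: divide_right_mono)
    finally have q1: "q \<le> a + s/(4*a)" .
    have "g * q \<le> g * (a + s/(4*a))" using q1 assms by (simp add: mult_left_mono)
    also have "\<dots> = g*a + (g * s)/(4*a)" by (simp add: algebra_simps)
    also have "\<dots> \<le> a + (g * s)/(4*a)" using assms by (simp add: mult_left_le_one_le)
    also have "\<dots> \<le> a + g * s*(1/(4*a) + 1/d)"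
      using assms sp by (simp add: distrib_left)
    finally show ?thesis using True sp by simp
  next
    case False
    have "q\<^sup>2 \<le> (s/d)\<^sup>2"
    proof -
      have "s * d\<^sup>2 \<le> s * s" using False sp by (simp add: mult_left_mono power2_eq_square)
      then have "s \<le> (s/d)\<^sup>2" using assms(7) by (simp add: field_simps power2_eq_square)
      then show ?thesis using assms(5) by linarith
    qed
    then have q1: "q \<le> s/d" using assms sp by (meson divide_nonneg_pos power2_le_imp_le)
    have "g * q \<le> g * (s/d)" using q1 assms using mult_left_mono[OF q1, of g] assms by simp
    also have "\<dots> \<le> g * s*(1/(4*a) + 1/d)" using assms sp by (simp add: distrib_left)
    finally show ?thesis using False by simp
  qed
qed

theorem mainTheorem1:
  fixes \<sigma> :: "real \<Rightarrow> cmat2" and t0 l c :: real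
  assumes t0: "t0 > 0"
    and psd: "\<And>t. 0 < t \<Longrightarrow> t < t0 \<Longrightarrow> psd (\<sigma> t)"
    and tr_pos: "\<And>t. 0 < t \<Longrightarrow> t < t0 \<Longrightarrow> Re (trace (\<sigma> t)) > 0"
    and conv: "((\<lambda>t. (1 / Re (trace (\<sigma> t))) *\<^sub>R \<sigma> t) \<longlongrightarrow> ket0bra0) (at_right 0)"
    and l: "l > 0" and bounds:
      "\<forall>\<^sub>F t in at_right 0. cmod (\<sigma> t $ 1 $ 2) \<ge> l * t \<and> Re (\<sigma> t $ 2 $ 2) \<le> c * t\<^sup>2"
  shows "\<not> (\<exists>(M :: 'a measure) (\<tau> :: 'a \<Rightarrow> cmat2) (f :: real \<Rightarrow> 'a \<Rightarrow> real).
            finite_measure M \<and>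
            \<tau> \<in> borel_measurable M \<and> (\<forall>x\<in>space M. density_matrix (\<tau> x)) \<and>
            (\<forall>t. 0 < t \<and> t < t0 \<longrightarrow>
               f t \<in> borel_measurable M \<and> (\<forall>x\<in>space M. 0 \<le> f t x \<and> f t x \<le> 1) \<and>
               has_bochner_integral M (\<lambda>x. f t x *\<^sub>R \<tau> x) (\<sigma> t)))"
proof
  assume "\<exists>(M :: 'a measure) (\<tau> :: 'a \<Rightarrow> cmat2) (f :: real \<Rightarrow> 'a \<Rightarrow> real).
            finite_measure M \<and>
            \<tau> \<in> borel_measurable M \<and> (\<forall>x\<in>space M. density_matrix (\<tau> x)) \<and>
            (\<forall>t. 0 < t \<and> t < t0 \<longrightarrow>
               f t \<in> borel_measurable M \<and> (\<forall>x\<in>space M. 0 \<le> f t x \<and> f t x \<le> 1) \<and>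
               has_bochner_integral M (\<lambda>x. f t x *\<^sub>R \<tau> x) (\<sigma> t))"
  then obtain M :: "'a measure" and \<tau> :: "'a \<Rightarrow> cmat2" and f :: "real \<Rightarrow> 'a \<Rightarrow> real" where
    fm: "finite_measure M" and tm: "\<tau> \<in> borel_measurable M" and dm: "\<forall>x\<in>space M. density_matrix (\<tau> x)"
    and ft: "\<And>t. 0 < t \<Longrightarrow> t < t0 \<Longrightarrow>
               f t \<in> borel_measurable M \<and> (\<forall>x\<in>space M. 0 \<le> f t x \<and> f t x \<le> 1) \<and>
               has_bochner_integral M (\<lambda>x. f t x *\<^sub>R \<tau> x) (\<sigma> t)"
    by blast
  interpret finite_measure M by (rule fm)
  define s where "s x = Re (\<tau> x $ 2 $ 2)" for x
  have blRe: "bounded_linear (\<lambda>A::cmat2. Re (A $ 2 $ 2))"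
    using bounded_linear_compose[OF bounded_linear_Re bounded_linear_compose[OF bounded_linear_vec_nth bounded_linear_vec_nth]]
    unfolding o_def by blast
  have bl12: "bounded_linear (\<lambda>A::cmat2. A $ 1 $ 2)"
    using bounded_linear_compose[OF bounded_linear_vec_nth bounded_linear_vec_nth] unfolding o_def by blast
  have sm: "s \<in> borel_measurable M"
    unfolding s_def using measurable_compose[OF tm borel_measurable_continuous_onI[OF linear_continuous_on[OF blRe]]]
    by (simp add: o_def)
  define A where "A n = {x\<in>space M. 0 < s x \<and> s x < (1 / real (Suc n))\<^sup>2}" for n
  have Asets: "range A \<subseteq> sets M" unfolding A_def using sm by auto
  have Adec: "decseq A"
  proof (rule decseq_SucI)
    fix n
    have pm: "(1 / real (Suc (Suc n)))\<^sup>2 \<le> (1 / real (Suc n))\<^sup>2"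
      by (intro power_mono) (auto simp: frac_le)
    show "A (Suc n) \<subseteq> A n" unfolding A_def using order_less_le_trans[OF _ pm] by blast
  qed
  have Aint: "(\<Inter>i. A i) = {}"
  proof safe
    fix x assume x: "x \<in> (\<Inter>i. A i)"
    then have sp: "0 < s x" unfolding A_def by auto
    obtain m where m: "1 / s x < real m" using reals_Archimedean2 by blast
    define n where "n = m"
    have n: "1 / s x < real (Suc n)" using m unfolding n_def by simp
    then have "1 / real (Suc n) < s x" using sp
      by (simp add: field_simps)
    moreover have "(1 / real (Suc n))\<^sup>2 \<le> 1 / real (Suc n)"
      proof -
      have "0 < 1 / real (Suc n)" "1 / real (Suc n) \<le> 1" by auto
      moreover have "\<And>y::real. 0 \<le> y \<Longrightarrow> y \<le> 1 \<Longrightarrow> y\<^sup>2 \<le> y"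
        unfolding power2_eq_square using mult_left_le_one_le by blast
      ultimately show ?thesis by (meson less_imp_le)
    qed
    ultimately have "(1 / real (Suc n))\<^sup>2 < s x" by linarith
    moreover have "x \<in> A n" using x by auto
    ultimately show "x \<in> {}" unfolding A_def by auto
  qed
  have Alim: "(\<lambda>n. measure M (A n)) \<longlonglongrightarrow> 0"
    using finite_Lim_measure_decseq[OF Asets Adec] Aint by simp
  define C where "C = \<bar>c\<bar> + 1"
  have Cpos: "C > 0" and cC: "c \<le> C" unfolding C_def by auto
  define \<beta> where "\<beta> = C / l"
  have \<beta>pos: "\<beta> > 0" unfolding \<beta>_def using Cpos l by simp
  have "\<forall>\<^sub>F n in sequentially. measure M (A n) < l / (4 * \<beta>)"
    using order_tendstoD(2)[OF Alim] \<beta>pos l by simp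
  then obtain n where n: "measure M (A n) < l / (4 * \<beta>)"
    using eventually_happens by (metis eventually_sequentially order.refl)
  define \<delta> where "\<delta> = 1 / real (Suc n)"
  have \<delta>pos: "\<delta> > 0" unfolding \<delta>_def by simp
  have "\<forall>\<^sub>F t in at_right 0. (cmod (\<sigma> t $ 1 $ 2) \<ge> l * t \<and> Re (\<sigma> t $ 2 $ 2) \<le> c * t\<^sup>2)
        \<and> t \<in> {0<..<min t0 (l * \<delta> / (4 * C))}"
  proof -
    have ev2: "\<forall>\<^sub>F t in at_right 0. t \<in> {0<..<min t0 (l * \<delta> / (4 * C))}"
      by (rule eventually_at_right_real) (use t0 l \<delta>pos Cpos in auto)
    show ?thesis using eventually_conj[OF bounds ev2] by simp
  qed
  then obtain t where tb: "cmod (\<sigma> t $ 1 $ 2) \<ge> l * t" "Re (\<sigma> t $ 2 $ 2) \<le> c * t\<^sup>2"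
     and tpos: "0 < t" and tt0: "t < t0" and tsmall: "t < l * \<delta> / (4 * C)"
    using eventually_happens[of _ "at_right (0::real)"] by auto
  have fmeas: "f t \<in> borel_measurable M" and f01: "\<And>x. x \<in> space M \<Longrightarrow> 0 \<le> f t x \<and> f t x \<le> 1"
    and hb: "has_bochner_integral M (\<lambda>x. f t x *\<^sub>R \<tau> x) (\<sigma> t)"
    using ft[OF tpos tt0] by auto
  have hb12: "has_bochner_integral M (\<lambda>x. (f t x *\<^sub>R \<tau> x) $ 1 $ 2) (\<sigma> t $ 1 $ 2)"
    using has_bochner_integral_bounded_linear[OF bl12 hb] .
  have hb22: "has_bochner_integral M (\<lambda>x. f t x * s x) (Re (\<sigma> t $ 2 $ 2))"
    using has_bochner_integral_bounded_linear[OF blRe hb] unfolding s_def by simp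
  define \<alpha> where "\<alpha> = \<beta> * t"
  have \<alpha>pos: "\<alpha> > 0" unfolding \<alpha>_def using \<beta>pos tpos by simp
  define K where "K = 1 / (4 * \<alpha>) + 1 / \<delta>"
  have Kpos: "K \<ge> 0" unfolding K_def using \<alpha>pos \<delta>pos by simp
  have indint: "integrable M (indicator (A n) :: 'a \<Rightarrow> real)"
  proof -
    have An: "A n \<in> sets M" using Asets by auto
    have "emeasure M (A n) < \<infinity>" by (simp add: emeasure_eq_measure)
    from Bochner_Integration.integrable_indicator[OF An this, of "1::real"]
    show ?thesis by simp
  qed
  define h where "h x = \<alpha> * indicator (A n) x + f t x * s x * K" for x
  have hint: "integrable M h" unfolding h_def
  proof (rule Bochner_Integration.integrable_add)
    have "A n \<in> sets M" using Asets by auto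
    then show "integrable M (\<lambda>x. \<alpha> * indicator (A n) x)" by (simp add: emeasure_eq_measure)
    have "integrable M (\<lambda>x. f t x * s x)" using hb22 by (rule integrable.intros)
    then show "integrable M (\<lambda>x. f t x * s x * K)" by simp
  qed
  have hI: "integral\<^sup>L M h = \<alpha> * measure M (A n) + Re (\<sigma> t $ 2 $ 2) * K"
  proof -
    have An: "A n \<in> sets M" using Asets by auto
    have i2: "integrable M (\<lambda>x. f t x * s x)" using hb22 by (rule integrable.intros)
    have "integral\<^sup>L M h = integral\<^sup>L M (\<lambda>x. \<alpha> * indicator (A n) x) + integral\<^sup>L M (\<lambda>x. f t x * s x * K)"
      unfolding h_def using An i2 indint by (intro Bochner_Integration.integral_add) auto
    also have "\<dots> = \<alpha> * measure M (A n) + integral\<^sup>L M (\<lambda>x. f t x * s x) * K"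
      using An indint by simp
    also have "integral\<^sup>L M (\<lambda>x. f t x * s x) = Re (\<sigma> t $ 2 $ 2)"
      using hb22 by (rule has_bochner_integral_integral_eq)
    finally show ?thesis .
  qed
  have "l * t \<le> cmod (\<sigma> t $ 1 $ 2)" by (rule tb(1))
  also have "\<dots> = norm (integral\<^sup>L M (\<lambda>x. (f t x *\<^sub>R \<tau> x) $ 1 $ 2))"
    using hb12 by (simp add: has_bochner_integral_integral_eq)
  also have "\<dots> \<le> integral\<^sup>L M (\<lambda>x. norm ((f t x *\<^sub>R \<tau> x) $ 1 $ 2))"
    by (rule integral_norm_bound)
  also have "\<dots> \<le> integral\<^sup>L M h"
  proof (rule integral_mono[OF _ hint])
    show "integrable M (\<lambda>x. norm ((f t x *\<^sub>R \<tau> x) $ 1 $ 2))"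
      using Bochner_Integration.integrable_norm[OF integrable.intros[OF hb12]] .
    fix x assume x: "x \<in> space M"
    have d: "density_matrix (\<tau> x)" using dm x by auto
    have "norm ((f t x *\<^sub>R \<tau> x) $ 1 $ 2) = f t x * cmod (\<tau> x $ 1 $ 2)"
      using f01[OF x] by simp
    also have "\<dots> \<le> \<alpha> * (if 0 < s x \<and> s x < \<delta>\<^sup>2 then 1 else 0) + f t x * s x * (1/(4*\<alpha>) + 1/\<delta>)"
      using pw[of "f t x" "s x" "cmod (\<tau> x $ 1 $ 2)" \<alpha> \<delta>] f01[OF x] dm_props[OF d] \<alpha>pos \<delta>pos
      unfolding s_def by auto
    also have "\<dots> = h x" unfolding h_def K_def A_def \<delta>_def using x by (simp add: indicator_def)
    finally show "norm ((f t x *\<^sub>R \<tau> x) $ 1 $ 2) \<le> h x" .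
  qed
  also have "\<dots> = \<alpha> * measure M (A n) + Re (\<sigma> t $ 2 $ 2) * K" by (rule hI)
  also have "\<dots> \<le> \<alpha> * measure M (A n) + (C * t\<^sup>2) * K"
  proof -
    have "Re (\<sigma> t $ 2 $ 2) \<le> C * t\<^sup>2" using tb(2) cC by (smt (verit) mult_right_mono zero_le_power2)
    then show ?thesis using Kpos by (simp add: mult_right_mono)
  qed
  also have "\<dots> < l * t"
  proof -
    have a1: "\<alpha> * measure M (A n) < l * t / 4"
    proof -
      have "\<beta> * measure M (A n) < l / 4" using n \<beta>pos by (simp add: field_simps)
      then show ?thesis unfolding \<alpha>_def using tpos
        by (smt (verit, ccfv_SIG) mult.commute mult.left_commute mult_strict_left_mono divide_inverse)
    qed
    have a2: "C * t\<^sup>2 * (1 / (4 * \<alpha>)) = l * t / 4"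
      unfolding \<alpha>_def \<beta>_def using tpos l Cpos by (simp add: field_simps power2_eq_square)
    have a3: "C * t\<^sup>2 * (1 / \<delta>) < l * t / 4"
    proof -
      have "C * t / \<delta> < l / 4" using tsmall Cpos \<delta>pos by (simp add: field_simps)
      then have "t * (C * t / \<delta>) < t * (l / 4)" using tpos by (rule mult_strict_left_mono)
      then show ?thesis by (simp add: field_simps power2_eq_square)
    qed
    have "(C * t\<^sup>2) * K = C * t\<^sup>2 * (1 / (4 * \<alpha>)) + C * t\<^sup>2 * (1 / \<delta>)"
      unfolding K_def by (rule distrib_left)
    moreover have "0 < l * t" using l tpos by simp
    ultimately show ?thesis using a1 a2 a3 by linarith
  qed
  finally show False by simp
qed
end
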